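(* The $(\min,-)$ convolution of two vectors of length $n$ can be computed in $O(n\sqrt n)$ time in the nonuniform linear decision tree model.
   Context: For vectors $\vec x=\langle x_0,\dots,x_{n-1}\rangle$, $\vec y=\langle y_0,\dots,y_{n-1}\rangle$ of reals, the $(\min,-)$ convolution is the vector whose $k$th entry is $\min_{i=0}^{k}(x_i-y_{k-i})$, $k=0,\dots,n-1$. In the nonuniform linear decision tree model, for each input size there is a separate decision tree whose internal nodes test the sign of a linear function of the input values; the cost is the depth of the tree. *)

theory Defs
  imports Complex_Main
begin

text \<open>Inputs of size n: two vectors x = (x_0..x_{n-1}), y = (y_0..y_{n-1}),
  represented as functions nat => real (only entries below n matter).\<close>

type_synonym linform = "(nat \<Rightarrow> real) \<times> (nat \<Rightarrow> real) \<times> real"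

definition lin :: "nat \<Rightarrow> linform \<Rightarrow> (nat \<Rightarrow> real) \<Rightarrow> (nat \<Rightarrow> real) \<Rightarrow> real" where
  "lin n l x y = (case l of (a, b, c) \<Rightarrow> (\<Sum>i<n. a i * x i) + (\<Sum>i<n. b i * y i) + c)"

text \<open>Linear decision tree: internal nodes test the sign (negative / zero / positive) of a
  linear form of the input; a leaf outputs, for each output position k, a linear form of
  the input (so the output is a linear function of the input on each leaf region).\<close>

datatype ldt = Leaf "nat \<Rightarrow> linform" | Node linform ldt ldt ldt

fun eval_ldt :: "nat \<Rightarrow> ldt \<Rightarrow> (nat \<Rightarrow> real) \<Rightarrow> (nat \<Rightarrow> real) \<Rightarrow> nat \<Rightarrow> real" where
  "eval_ldt n (Leaf f) x y = (\<lambda>k. lin n (f k) x y)"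
| "eval_ldt n (Node l tneg tzero tpos) x y =
     (if lin n l x y < 0 then eval_ldt n tneg x y
      else if lin n l x y = 0 then eval_ldt n tzero x y
      else eval_ldt n tpos x y)"

fun depth :: "ldt \<Rightarrow> nat" where
  "depth (Leaf f) = 0"
| "depth (Node l t1 t2 t3) = 1 + max (depth t1) (max (depth t2) (depth t3))"

definition min_minus_conv :: "(nat \<Rightarrow> real) \<Rightarrow> (nat \<Rightarrow> real) \<Rightarrow> nat \<Rightarrow> real" where
  "min_minus_conv x y k = Min {x i - y (k - i) | i. i \<le> k}"

definition computes_min_minus_conv :: "nat \<Rightarrow> ldt \<Rightarrow> bool" where
  "computes_min_minus_conv n T \<longleftrightarrow>
     (\<forall>x y. \<forall>k<n. eval_ldt n T x y k = min_minus_conv x y k)"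

end

theory Submission
  imports Defs "HOL-Library.FuncSet"
begin

definition sub :: "linform \<Rightarrow> linform \<Rightarrow> linform" where
  "sub l1 l2 = (case l1 of (a1,b1,c1) \<Rightarrow> case l2 of (a2,b2,c2) \<Rightarrow>
      (\<lambda>i. a1 i - a2 i, \<lambda>i. b1 i - b2 i, c1 - c2))"

lemma lin_sub[simp]: "lin n (sub l1 l2) x y = lin n l1 x y - lin n l2 x y"
  by (cases l1; cases l2) (simp add: sub_def lin_def sum_subtractf algebra_simps)

definition solv :: "nat \<Rightarrow> ((nat\<Rightarrow>real)\<Rightarrow>(nat\<Rightarrow>real)\<Rightarrow>nat\<Rightarrow>real) \<Rightarrow> ((nat\<Rightarrow>real)\<times>(nat\<Rightarrow>real)) set \<Rightarrow> real \<Rightarrow> bool" where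
  "solv n F R b \<longleftrightarrow> (\<exists>T. real (depth T) \<le> b \<and> (\<forall>x y. (x,y) \<in> R \<longrightarrow> (\<forall>k<n. eval_ldt n T x y k = F x y k)))"

lemma solv_mono: "solv n F R b \<Longrightarrow> R' \<subseteq> R \<Longrightarrow> b \<le> b' \<Longrightarrow> solv n F R' b'"
  unfolding solv_def by (meson order_trans subsetD)

lemma solv_empty: "b \<ge> 0 \<Longrightarrow> solv n F {} b"
  unfolding solv_def by (rule exI[of _ "Leaf (\<lambda>_. (\<lambda>_. 0, \<lambda>_. 0, 0))"]) simp

lemma solv_leaf: "b \<ge> 0 \<Longrightarrow> (\<And>x y k. (x,y) \<in> R \<Longrightarrow> k < n \<Longrightarrow> F x y k = lin n (f k) x y) \<Longrightarrow> solv n F R b"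
  unfolding solv_def by (rule exI[of _ "Leaf f"]) simp

lemma solv_node:
  assumes "solv n F (R \<inter> {(x,y). lin n l x y < 0}) (b - 1)"
    and "solv n F (R \<inter> {(x,y). lin n l x y = 0}) (b - 1)"
    and "solv n F (R \<inter> {(x,y). lin n l x y > 0}) (b - 1)"
  shows "solv n F R b"
proof -
  obtain T1 where T1: "real (depth T1) \<le> b - 1" "\<forall>x y. (x,y) \<in> R \<inter> {(x,y). lin n l x y < 0} \<longrightarrow> (\<forall>k<n. eval_ldt n T1 x y k = F x y k)"
    using assms(1) unfolding solv_def by blast
  obtain T2 where T2: "real (depth T2) \<le> b - 1" "\<forall>x y. (x,y) \<in> R \<inter> {(x,y). lin n l x y = 0} \<longrightarrow> (\<forall>k<n. eval_ldt n T2 x y k = F x y k)"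
    using assms(2) unfolding solv_def by blast
  obtain T3 where T3: "real (depth T3) \<le> b - 1" "\<forall>x y. (x,y) \<in> R \<inter> {(x,y). lin n l x y > 0} \<longrightarrow> (\<forall>k<n. eval_ldt n T3 x y k = F x y k)"
    using assms(3) unfolding solv_def by blast
  show ?thesis unfolding solv_def
    apply (rule exI[of _ "Node l T1 T2 T3"])
    using T1 T2 T3 by (auto simp: not_less_iff_gr_or_eq)
qed

lemma sum_upd_remove:
  fixes f :: "nat \<Rightarrow> nat"
  assumes "k0 < n"
  shows "(\<Sum>k<n. (f(k0 := v)) k) + f k0 = (\<Sum>k<n. f k) + v"
proof -
  have "(\<Sum>k<n. (f(k0 := v)) k) = v + (\<Sum>k\<in>{..<n}-{k0}. f k)"
    using assms by (simp add: sum.remove[of "{..<n}" k0])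
  moreover have "(\<Sum>k<n. f k) = f k0 + (\<Sum>k\<in>{..<n}-{k0}. f k)"
    using assms by (simp add: sum.remove[of "{..<n}" k0])
  ultimately show ?thesis by simp
qed

definition spec :: "nat \<Rightarrow> ((nat\<Rightarrow>real)\<Rightarrow>(nat\<Rightarrow>real)\<Rightarrow>nat\<Rightarrow>real) \<Rightarrow> ((nat\<Rightarrow>real)\<times>(nat\<Rightarrow>real)) set \<Rightarrow> (nat \<Rightarrow> linform list) \<Rightarrow> bool" where
  "spec n F R C \<longleftrightarrow> (\<forall>k<n. C k \<noteq> []) \<and> (\<forall>x y k. (x,y) \<in> R \<longrightarrow> k < n \<longrightarrow>
      (\<exists>h\<in>set (C k). F x y k = lin n h x y) \<and> (\<forall>h\<in>set (C k). F x y k \<le> lin n h x y))"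

lemma final_aux:
  "(\<Sum>k<n. length (C k) - 1) = m \<Longrightarrow> spec n F R C \<Longrightarrow> solv n F R (real m)"
proof (induction m arbitrary: C R rule: less_induct)
  case (less m)
  show ?case
  proof (cases "\<exists>k0<n. length (C k0) \<ge> 2")
    case False
    have "solv n F R (real m)"
    proof (rule solv_leaf[where f="\<lambda>k. hd (C k)"])
      fix x y k assume xy: "(x,y) \<in> R" and k: "k < n"
      have ne: "C k \<noteq> []" and len: "length (C k) < 2" using less.prems k False by (auto simp: spec_def)
      then obtain h where "C k = [h]" by (cases "C k") auto
      moreover have "\<exists>h\<in>set (C k). F x y k = lin n h x y" using less.prems xy k by (auto simp: spec_def)
      ultimately show "F x y k = lin n (hd (C k)) x y" by auto
    qed simp
    then show ?thesis .
  next
    case True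
    then obtain k0 where k0: "k0 < n" "length (C k0) \<ge> 2" by blast
    then obtain h1 h2 rest where Ck0: "C k0 = h1 # h2 # rest"
      by (cases "C k0"; cases "tl (C k0)") auto
    define C1 where "C1 = C(k0 := h1 # rest)"
    define C2 where "C2 = C(k0 := h2 # rest)"
    have s1: "(\<Sum>k<n. length (C1 k) - 1) = m - 1"
    proof -
      have "(\<Sum>k<n. length (C1 k) - 1) = (\<Sum>k<n. ((\<lambda>k. length (C k) - 1)(k0 := length rest)) k)"
        by (rule sum.cong) (auto simp: C1_def Ck0)
      then show ?thesis
      using sum_upd_remove[OF k0(1), of "\<lambda>k. length (C k) - 1" "length rest"] less.prems(1) Ck0
        by simp
    qed
    have s2: "(\<Sum>k<n. length (C2 k) - 1) = m - 1"
    proof -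
      have "(\<Sum>k<n. length (C2 k) - 1) = (\<Sum>k<n. ((\<lambda>k. length (C k) - 1)(k0 := length rest)) k)"
        by (rule sum.cong) (auto simp: C2_def Ck0)
      then show ?thesis
      using sum_upd_remove[OF k0(1), of "\<lambda>k. length (C k) - 1" "length rest"] less.prems(1) Ck0
        by simp
    qed
    have mpos: "m \<ge> 1"
      using less.prems(1) k0 sum_upd_remove[OF k0(1), of "\<lambda>k. length (C k) - 1" "length rest"] Ck0 by simp
    have sp1: "spec n F (R \<inter> {(x,y). lin n (sub h1 h2) x y \<le> 0}) C1"
      unfolding spec_def
    proof (intro conjI allI impI)
      fix k assume "k < n" then show "C1 k \<noteq> []" using less.prems(2) by (simp add: spec_def C1_def)
    next
      fix x y k assume xy: "(x,y) \<in> R \<inter> {(x,y). lin n (sub h1 h2) x y \<le> 0}" and k: "k < n"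
      have A: "\<exists>h\<in>set (C k). F x y k = lin n h x y" and B: "\<forall>h\<in>set (C k). F x y k \<le> lin n h x y"
        using less.prems(2) xy k unfolding spec_def by blast+
      show "\<exists>h\<in>set (C1 k). F x y k = lin n h x y"
      proof (cases "k = k0")
        case True
        have "\<exists>h\<in>set (h1#h2#rest). F x y k = lin n h x y" using A Ck0 True by (simp only:)
        then obtain h where h: "h \<in> set (h1#h2#rest)" "F x y k = lin n h x y" by blast
        have "lin n h1 x y \<le> lin n h2 x y" using xy by simp
        moreover have "F x y k \<le> lin n h1 x y" using B True Ck0 by simp
        ultimately show ?thesis using h True by (auto simp: C1_def)
      qed (use A in \<open>simp add: C1_def\<close>)
      show "\<forall>h\<in>set (C1 k). F x y k \<le> lin n h x y"
        using B by (auto simp: C1_def Ck0)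
    qed
    have sp2: "spec n F (R \<inter> {(x,y). lin n (sub h1 h2) x y \<ge> 0}) C2"
      unfolding spec_def
    proof (intro conjI allI impI)
      fix k assume "k < n" then show "C2 k \<noteq> []" using less.prems(2) by (simp add: spec_def C2_def)
    next
      fix x y k assume xy: "(x,y) \<in> R \<inter> {(x,y). lin n (sub h1 h2) x y \<ge> 0}" and k: "k < n"
      have A: "\<exists>h\<in>set (C k). F x y k = lin n h x y" and B: "\<forall>h\<in>set (C k). F x y k \<le> lin n h x y"
        using less.prems(2) xy k unfolding spec_def by blast+
      show "\<exists>h\<in>set (C2 k). F x y k = lin n h x y"
      proof (cases "k = k0")
        case True
        have "\<exists>h\<in>set (h1#h2#rest). F x y k = lin n h x y" using A Ck0 True by (simp only:)
        then obtain h where h: "h \<in> set (h1#h2#rest)" "F x y k = lin n h x y" by blast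
        have "lin n h2 x y \<le> lin n h1 x y" using xy by simp
        moreover have "F x y k \<le> lin n h2 x y" using B True Ck0 by simp
        ultimately show ?thesis using h True by (auto simp: C2_def)
      qed (use A in \<open>simp add: C2_def\<close>)
      show "\<forall>h\<in>set (C2 k). F x y k \<le> lin n h x y"
        using B by (auto simp: C2_def Ck0)
    qed
    have r1: "solv n F (R \<inter> {(x,y). lin n (sub h1 h2) x y \<le> 0}) (real (m-1))"
      using less.IH[OF _ s1 sp1] mpos by simp
    have r2: "solv n F (R \<inter> {(x,y). lin n (sub h1 h2) x y \<ge> 0}) (real (m-1))"
      using less.IH[OF _ s2 sp2] mpos by simp
    have e: "real m - 1 = real (m - 1)" using mpos by simp
    show ?thesis
      apply (rule solv_node[where l = "sub h1 h2"])
      unfolding e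
      apply (rule solv_mono[OF r1], auto)
      apply (rule solv_mono[OF r1], auto)
      by (rule solv_mono[OF r2], auto)
  qed
qed

definition val :: "(nat \<Rightarrow> linform) \<Rightarrow> nat \<Rightarrow> nat \<Rightarrow> (nat\<Rightarrow>real)\<times>(nat\<Rightarrow>real) \<Rightarrow> real" where
  "val g n u p = lin n (g u) (fst p) (snd p)"

definition ot :: "(nat \<Rightarrow> linform) \<Rightarrow> nat \<Rightarrow> nat \<Rightarrow> (nat\<Rightarrow>real)\<times>(nat\<Rightarrow>real) \<Rightarrow> (nat \<times> nat \<Rightarrow> real)" where
  "ot g n N p = restrict (\<lambda>(u,v). sgn (val g n u p - val g n v p)) ({..<N}\<times>{..<N})"

definition agree :: "(nat \<Rightarrow> linform) \<Rightarrow> nat \<Rightarrow> ((nat\<Rightarrow>real)\<times>(nat\<Rightarrow>real)) set \<Rightarrow> nat \<Rightarrow> bool" where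
  "agree g n R t \<longleftrightarrow> (\<forall>p\<in>R. \<forall>q\<in>R. \<forall>u<t. \<forall>v<t. sgn (val g n u p - val g n v p) = sgn (val g n u q - val g n v q))"

lemma ot_finite: "finite (ot g n N ` R)"
proof (rule finite_subset)
  show "ot g n N ` R \<subseteq> Pi\<^sub>E ({..<N}\<times>{..<N}) (\<lambda>_. {-1,0,1::real})"
  proof (rule image_subsetI)
    fix p
    have "\<And>z::real. sgn z \<in> {-1,0,1}" by (simp add: sgn_if)
    then show "ot g n N p \<in> Pi\<^sub>E ({..<N}\<times>{..<N}) (\<lambda>_. {-1,0,1::real})"
      unfolding ot_def restrict_PiE_iff by (auto split: prod.splits)
  qed
  show "finite (Pi\<^sub>E ({..<N}\<times>{..<N}) (\<lambda>_. {-1,0,1::real}))"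
    by (rule finite_PiE) auto
qed

lemma ot_card_mono: "R' \<subseteq> R \<Longrightarrow> card (ot g n N ` R') \<le> card (ot g n N ` R)"
  by (rule card_mono[OF ot_finite]) auto

lemma ot_card_pos: "R \<noteq> {} \<Longrightarrow> card (ot g n N ` R) > 0"
  using ot_finite by (auto simp: card_gt_0_iff)

lemma ot_card_split:
  assumes "t < N" "s < N"
  shows "card (ot g n N ` (R \<inter> {p. val g n t p < val g n s p})) + card (ot g n N ` (R \<inter> {p. val g n t p > val g n s p}))
     \<le> card (ot g n N ` R)"
proof -
  have disj: "ot g n N ` (R \<inter> {p. val g n t p < val g n s p}) \<inter> ot g n N ` (R \<inter> {p. val g n t p > val g n s p}) = {}"
  proof (rule ccontr)
    assume "\<not> ?thesis"
    then obtain p q where pq: "val g n t p < val g n s p" "val g n t q > val g n s q" "ot g n N p = ot g n N q"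
      by auto
    then have "ot g n N p (t,s) = ot g n N q (t,s)" by simp
    then show False using pq(1,2) assms by (simp add: ot_def sgn_if split: if_splits)
  qed
  have "card (ot g n N ` (R \<inter> {p. val g n t p < val g n s p})) + card (ot g n N ` (R \<inter> {p. val g n t p > val g n s p}))
     = card (ot g n N ` (R \<inter> {p. val g n t p < val g n s p}) \<union> ot g n N ` (R \<inter> {p. val g n t p > val g n s p}))"
    by (rule card_Un_disjoint[symmetric, OF ot_finite ot_finite disj])
  also have "\<dots> \<le> card (ot g n N ` R)"
    by (rule card_mono[OF ot_finite]) auto
  finally show ?thesis .
qed

lemma solv_cmp:
  assumes "solv n F (R \<inter> {p. val g n t p < val g n s p}) (b - 1)"
    and "solv n F (R \<inter> {p. val g n t p = val g n s p}) (b - 1)"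
    and "solv n F (R \<inter> {p. val g n t p > val g n s p}) (b - 1)"
  shows "solv n F R b"
proof (rule solv_node[where l = "sub (g t) (g s)"])
  show "solv n F (R \<inter> {(x, y). lin n (sub (g t) (g s)) x y < 0}) (b - 1)"
    by (rule solv_mono[OF assms(1)]) (auto simp: val_def)
  show "solv n F (R \<inter> {(x, y). lin n (sub (g t) (g s)) x y = 0}) (b - 1)"
    by (rule solv_mono[OF assms(2)]) (auto simp: val_def)
  show "solv n F (R \<inter> {(x, y). lin n (sub (g t) (g s)) x y > 0}) (b - 1)"
    by (rule solv_mono[OF assms(3)]) (auto simp: val_def)
qed

lemma agree_le:
  assumes "agree g n R t" "p0 \<in> R" "p \<in> R" "u < t" "v < t" "val g n u p0 \<le> val g n v p0"
  shows "val g n u p \<le> val g n v p"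
proof -
  have "sgn (val g n u p - val g n v p) = sgn (val g n u p0 - val g n v p0)"
    using assms unfolding agree_def by blast
  then show ?thesis using assms(6) by (auto simp: sgn_if split: if_splits)
qed

lemma agree_less:
  assumes "agree g n R t" "p0 \<in> R" "p \<in> R" "u < t" "v < t" "val g n u p0 < val g n v p0"
  shows "val g n u p < val g n v p"
proof -
  have "sgn (val g n u p - val g n v p) = sgn (val g n u p0 - val g n v p0)"
    using assms unfolding agree_def by blast
  then show ?thesis using assms(6) by (auto simp: sgn_if split: if_splits)
qed

lemma agree_sub: "agree g n R t \<Longrightarrow> R' \<subseteq> R \<Longrightarrow> agree g n R' t"
  unfolding agree_def by blast

lemma agree_place:
  assumes "agree g n R t" "R' \<subseteq> R"
    and "\<And>u. u < t \<Longrightarrow> \<exists>c. \<forall>p\<in>R'. sgn (val g n t p - val g n u p) = c"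
  shows "agree g n R' (Suc t)"
  unfolding agree_def
proof (intro ballI allI impI)
  fix p q u v assume pq: "p \<in> R'" "q \<in> R'" and uv: "u < Suc t" "v < Suc t"
  have neg: "sgn (a - b) = - sgn (b - a)" for a b :: real by (simp add: sgn_if)
  show "sgn (val g n u p - val g n v p) = sgn (val g n u q - val g n v q)"
  proof (cases "u = t")
    case True
    show ?thesis
    proof (cases "v = t")
      case False
      then have "v < t" using uv by simp
      then obtain c where "\<forall>p\<in>R'. sgn (val g n t p - val g n v p) = c" using assms(3) by blast
      then show ?thesis using True pq by simp
    qed (use True in simp)
  next
    case False
    then have u: "u < t" using uv by simp
    show ?thesis
    proof (cases "v = t")
      case True
      obtain c where "\<forall>p\<in>R'. sgn (val g n t p - val g n u p) = c" using assms(3) u by blast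
      then have "sgn (val g n t p - val g n u p) = sgn (val g n t q - val g n u q)" using pq by simp
      moreover have "sgn (val g n u p - val g n t p) = - sgn (val g n t p - val g n u p)" by (rule neg)
      moreover have "sgn (val g n u q - val g n t q) = - sgn (val g n t q - val g n u q)" by (rule neg)
      ultimately show ?thesis using True by simp
    next
      case False
      then have "v < t" using uv by simp
      then show ?thesis using assms(1,2) pq u unfolding agree_def by blast
    qed
  qed
qed

lemma ex_argmax: "finite A \<Longrightarrow> A \<noteq> {} \<Longrightarrow> \<exists>a\<in>A. \<forall>b\<in>A. (f b :: real) \<le> f a"
proof -
  assume A: "finite A" "A \<noteq> {}"
  then have "Max (f ` A) \<in> f ` A" by (intro Max_in) auto
  then obtain a where a: "a \<in> A" "f a = Max (f ` A)" by auto
  have "\<forall>b\<in>A. f b \<le> f a" using A a by (simp add: Max_ge)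
  then show ?thesis using a by blast
qed

lemma ex_argmin: "finite A \<Longrightarrow> A \<noteq> {} \<Longrightarrow> \<exists>a\<in>A. \<forall>b\<in>A. (f a :: real) \<le> f b"
proof -
  assume A: "finite A" "A \<noteq> {}"
  then have "Min (f ` A) \<in> f ` A" by (intro Min_in) auto
  then obtain a where a: "a \<in> A" "f a = Min (f ` A)" by auto
  have "\<forall>b\<in>A. f a \<le> f b" using A a by (simp add: Min_le)
  then show ?thesis using a by blast
qed

lemma fred_step:
  assumes tN: "t < N" and ag: "agree g n R t" and ne: "R \<noteq> {}"
    and W: "W = card (ot g n N ` R)"
    and good: "\<And>R'. R' \<subseteq> R \<Longrightarrow> agree g n R' (Suc t) \<or> 2 * card (ot g n N ` R') \<le> W \<Longrightarrow> solv n F R' B"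
  shows "solv n F R (B + 2)"
proof -
  obtain p0 where p0: "p0 \<in> R" using ne by blast
  have split: "card (ot g n N ` (R \<inter> {p. val g n t p < val g n s p})) + card (ot g n N ` (R \<inter> {p. val g n t p > val g n s p})) \<le> W"
    if "s < t" for s using ot_card_split[of t N s g n R] that tN W by simp
  have Eplace: "agree g n X (Suc t)" if s: "s < t" and X: "X \<subseteq> R \<inter> {p. val g n t p = val g n s p}" for s X
  proof (rule agree_place[OF ag])
    show "X \<subseteq> R" using X by blast
    fix u assume u: "u < t"
    show "\<exists>c. \<forall>p\<in>X. sgn (val g n t p - val g n u p) = c"
    proof (intro exI ballI)
      fix p assume "p \<in> X"
      then have pR: "p \<in> R" and e: "val g n t p = val g n s p" using X by auto
      have "sgn (val g n s p - val g n u p) = sgn (val g n s p0 - val g n u p0)"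
        using ag p0 pR s u unfolding agree_def by blast
      then show "sgn (val g n t p - val g n u p) = sgn (val g n s p0 - val g n u p0)"
        using e by simp
    qed
  qed
  have hplace: "agree g n X (Suc t)" if X: "X \<subseteq> R"
    and H: "\<And>u. u < t \<Longrightarrow> (\<forall>p\<in>X. val g n u p < val g n t p) \<or> (\<forall>p\<in>X. val g n t p < val g n u p)" for X
  proof (rule agree_place[OF ag X])
    fix u assume u: "u < t"
    from H[OF u] show "\<exists>c. \<forall>p\<in>X. sgn (val g n t p - val g n u p) = c"
    proof
      assume "\<forall>p\<in>X. val g n u p < val g n t p"
      then show ?thesis by (intro exI[of _ 1]) (auto simp: sgn_if)
    next
      assume "\<forall>p\<in>X. val g n t p < val g n u p"
      then show ?thesis by (intro exI[of _ "-1"]) (auto simp: sgn_if)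
    qed
  qed
  have one: "solv n F R (B + 2)" if s: "s < t"
    and g1: "solv n F (R \<inter> {p. val g n t p < val g n s p}) B"
    and g2: "solv n F (R \<inter> {p. val g n t p = val g n s p}) B"
    and g3: "solv n F (R \<inter> {p. val g n t p > val g n s p}) B" for s
  proof -
    have "solv n F R (B + 1)"
      by (rule solv_cmp[where g=g and t=t and s=s]) (use g1 g2 g3 in auto)
    then show ?thesis by (rule solv_mono) auto
  qed
  have two: "solv n F R (B + 2)" if s: "s < t"
    and g1: "solv n F ((R \<inter> {p. val g n t p < val g n s p}) \<inter> {p. val g n t p < val g n s' p}) B"
    and g1': "solv n F ((R \<inter> {p. val g n t p < val g n s p}) \<inter> {p. val g n t p = val g n s' p}) B"
    and g1'': "solv n F ((R \<inter> {p. val g n t p < val g n s p}) \<inter> {p. val g n t p > val g n s' p}) B"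
    and g2: "solv n F (R \<inter> {p. val g n t p = val g n s p}) B"
    and g3: "solv n F (R \<inter> {p. val g n t p > val g n s p}) B" for s s'
  proof -
    have L: "solv n F (R \<inter> {p. val g n t p < val g n s p}) (B + 1)"
      by (rule solv_cmp[where g=g and t=t and s=s']) (use g1 g1' g1'' in auto)
    show ?thesis
    proof (rule solv_cmp[where g=g and t=t and s=s])
      show "solv n F (R \<inter> {p. val g n t p < val g n s p}) (B + 2 - 1)" by (rule solv_mono[OF L]) auto
      show "solv n F (R \<inter> {p. val g n t p = val g n s p}) (B + 2 - 1)" by (rule solv_mono[OF g2]) auto
      show "solv n F (R \<inter> {p. val g n t p > val g n s p}) (B + 2 - 1)" by (rule solv_mono[OF g3]) auto
    qed
  qed
  have Vle: "val g n u p \<le> val g n v p" if "p \<in> R" "u < t" "v < t" "val g n u p0 \<le> val g n v p0" for u v p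
    using agree_le[OF ag p0] that by blast
  show ?thesis
  proof (cases "t = 0")
    case True
    have "agree g n R (Suc t)" using True unfolding agree_def by auto
    then have "solv n F R B" using good by blast
    then show ?thesis by (rule solv_mono) auto
  next
    case False
    define S where "S = {s. s < t \<and> 2 * card (ot g n N ` (R \<inter> {p. val g n t p > val g n s p})) \<le> W}"
    show ?thesis
    proof (cases "S = {}")
      case True
      obtain smax where smax: "smax \<in> {..<t}" "\<forall>u\<in>{..<t}. val g n u p0 \<le> val g n smax p0"
        using ex_argmax[of "{..<t}" "\<lambda>u. val g n u p0"] False by auto
      show ?thesis
      proof (rule one[of smax])
        show "smax < t" using smax by simp
        have "smax \<notin> S" using True by simp
        then have "2 * card (ot g n N ` (R \<inter> {p. val g n t p < val g n smax p})) \<le> W"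
          using split[of smax] smax unfolding S_def by auto
        then show "solv n F (R \<inter> {p. val g n t p < val g n smax p}) B" by (intro good) auto
        show "solv n F (R \<inter> {p. val g n t p = val g n smax p}) B"
          using Eplace[of smax] smax by (intro good) auto
        have "agree g n (R \<inter> {p. val g n t p > val g n smax p}) (Suc t)"
        proof (rule hplace)
          fix u assume u: "u < t"
          have "\<forall>p\<in>R \<inter> {p. val g n t p > val g n smax p}. val g n u p < val g n t p"
            using Vle[of _ u smax] smax u by fastforce
          then show "(\<forall>p\<in>R \<inter> {p. val g n t p > val g n smax p}. val g n u p < val g n t p) \<or>
                     (\<forall>p\<in>R \<inter> {p. val g n t p > val g n smax p}. val g n t p < val g n u p)" by blast
        qed auto
        then show "solv n F (R \<inter> {p. val g n t p > val g n smax p}) B" by (intro good) auto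
      qed
    next
      case Sne: False
      have Sfin: "finite S" unfolding S_def by auto
      obtain s where s: "s \<in> S" "\<forall>u\<in>S. val g n s p0 \<le> val g n u p0"
        using ex_argmin[OF Sfin Sne, of "\<lambda>u. val g n u p0"] by auto
      have st: "s < t" using s unfolding S_def by auto
      have gG: "solv n F (R \<inter> {p. val g n t p > val g n s p}) B"
        using s(1) unfolding S_def by (intro good) auto
      have gE: "solv n F (R \<inter> {p. val g n t p = val g n s p}) B"
        using Eplace[of s] st by (intro good) auto
      show ?thesis
      proof (cases "2 * card (ot g n N ` (R \<inter> {p. val g n t p < val g n s p})) \<le> W")
        case True
        then have "solv n F (R \<inter> {p. val g n t p < val g n s p}) B" by (intro good) auto
        then show ?thesis using one[OF st] gE gG by blast
      next
        case Lbig: False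
        show ?thesis
        proof (cases "\<forall>u<t. val g n s p0 \<le> val g n u p0")
          case True
          have "agree g n (R \<inter> {p. val g n t p < val g n s p}) (Suc t)"
          proof (rule hplace)
            fix u assume u: "u < t"
            have "\<forall>p\<in>R \<inter> {p. val g n t p < val g n s p}. val g n t p < val g n u p"
              using Vle[of _ s u] True st u by fastforce
            then show "(\<forall>p\<in>R \<inter> {p. val g n t p < val g n s p}. val g n u p < val g n t p) \<or>
                     (\<forall>p\<in>R \<inter> {p. val g n t p < val g n s p}. val g n t p < val g n u p)" by blast
          qed auto
          then have "solv n F (R \<inter> {p. val g n t p < val g n s p}) B" by (intro good) auto
          then show ?thesis using one[OF st] gE gG by blast
        next
          case False
          define T where "T = {u. u < t \<and> val g n u p0 < val g n s p0}"
          have Tne: "T \<noteq> {}" using False unfolding T_def by auto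
          have Tfin: "finite T" unfolding T_def by auto
          obtain s' where s': "s' \<in> T" "\<forall>u\<in>T. val g n u p0 \<le> val g n s' p0"
            using ex_argmax[OF Tfin Tne, of "\<lambda>u. val g n u p0"] by auto
          have s't: "s' < t" and s's: "val g n s' p0 < val g n s p0" using s' unfolding T_def by auto
          have "s' \<notin> S" using s(2) s's by force
          then have hs': "2 * card (ot g n N ` (R \<inter> {p. val g n t p < val g n s' p})) < W"
            using split[OF s't] s't unfolding S_def by auto
          show ?thesis
          proof (rule two[OF st _ _ _ gE gG, of s'])
            have "card (ot g n N ` ((R \<inter> {p. val g n t p < val g n s p}) \<inter> {p. val g n t p < val g n s' p}))
                \<le> card (ot g n N ` (R \<inter> {p. val g n t p < val g n s' p}))"
              by (rule ot_card_mono) auto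
            then show "solv n F ((R \<inter> {p. val g n t p < val g n s p}) \<inter> {p. val g n t p < val g n s' p}) B"
              using hs' by (intro good) auto
            have "agree g n ((R \<inter> {p. val g n t p < val g n s p}) \<inter> {p. val g n t p = val g n s' p}) (Suc t)"
              by (rule Eplace[OF s't]) blast
            then show "solv n F ((R \<inter> {p. val g n t p < val g n s p}) \<inter> {p. val g n t p = val g n s' p}) B"
              by (intro good) auto
            have "agree g n ((R \<inter> {p. val g n t p < val g n s p}) \<inter> {p. val g n t p > val g n s' p}) (Suc t)"
            proof (rule hplace)
              fix u assume u: "u < t"
              show "(\<forall>p\<in>(R \<inter> {p. val g n t p < val g n s p}) \<inter> {p. val g n t p > val g n s' p}. val g n u p < val g n t p) \<or>
                     (\<forall>p\<in>(R \<inter> {p. val g n t p < val g n s p}) \<inter> {p. val g n t p > val g n s' p}. val g n t p < val g n u p)"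
              proof (cases "val g n u p0 \<le> val g n s' p0")
                case True
                then show ?thesis using Vle[of _ u s'] s't u by fastforce
              next
                case False
                then have "u \<notin> T" using s'(2) by force
                then have "val g n s p0 \<le> val g n u p0" using u unfolding T_def by auto
                then show ?thesis using Vle[of _ s u] st u by fastforce
              qed
            qed auto
            then show "solv n F ((R \<inter> {p. val g n t p < val g n s p}) \<inter> {p. val g n t p > val g n s' p}) B"
              by (intro good) auto
          qed
        qed
      qed
    qed
  qed
qed

lemma log2_mono_nat: "0 < a \<Longrightarrow> a \<le> b \<Longrightarrow> log 2 (real a) \<le> log 2 (real b)"
  by simp

lemma log2_half: "0 < a \<Longrightarrow> 2 * a \<le> b \<Longrightarrow> log 2 (real a) \<le> log 2 (real b) - 1"
proof -
  assume a: "0 < a" "2 * a \<le> b"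
  have "log 2 (2 * real a) \<le> log 2 (real b)" using a by simp
  moreover have "log 2 (2 * real a) = 1 + log 2 (real a)" using a by (simp add: log_mult)
  ultimately show ?thesis by simp
qed

lemma log2_nonneg: "0 < a \<Longrightarrow> 0 \<le> log 2 (real a)"
  by simp

lemma fredman:
  assumes base: "\<And>R. agree g n R N \<Longrightarrow> solv n F R K" and K0: "K \<ge> 0"
  shows "N - t = d \<Longrightarrow> t \<le> N \<Longrightarrow> agree g n R t \<Longrightarrow> R \<noteq> {} \<Longrightarrow>
    solv n F R (K + 2 * log 2 (card (ot g n N ` R)) + 2 * real (N - t))"
proof (induction d arbitrary: t R)
  case 0
  then have "t = N" by simp
  then have "solv n F R K" using base 0 by simp
  moreover have "0 \<le> log 2 (card (ot g n N ` R))" using ot_card_pos[OF "0.prems"(4), of g n N] by (intro log2_nonneg)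
  ultimately show ?case using solv_mono[of n F R K R] by auto
next
  case (Suc d)
  have tN: "t < N" using Suc.prems by simp
  have main: "\<And>R. card (ot g n N ` R) = c \<Longrightarrow> agree g n R t \<Longrightarrow> R \<noteq> {} \<Longrightarrow>
      solv n F R (K + 2 * log 2 (card (ot g n N ` R)) + 2 * real (N - t))" for c
  proof (induction c rule: less_induct)
    case (less c R)
    define W where "W = card (ot g n N ` R)"
    have Wpos: "0 < W" using ot_card_pos[OF less.prems(3)] unfolding W_def .
    define B where "B = K + 2 * log 2 W + 2 * real (N - t) - 2"
    have B0: "0 \<le> B" unfolding B_def using K0 tN log2_nonneg[OF Wpos] by simp
    have "solv n F R (B + 2)"
    proof (rule fred_step[OF tN less.prems(2) less.prems(3) W_def])
      fix R' assume R': "R' \<subseteq> R" and h: "agree g n R' (Suc t) \<or> 2 * card (ot g n N ` R') \<le> W"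
      show "solv n F R' B"
      proof (cases "R' = {}")
        case True then show ?thesis using solv_empty B0 by simp
      next
        case ne: False
        have c'pos: "0 < card (ot g n N ` R')" using ot_card_pos[OF ne] .
        have c'le: "card (ot g n N ` R') \<le> W" unfolding W_def using ot_card_mono[OF R'] .
        show ?thesis
        proof (cases "agree g n R' (Suc t)")
          case True
          have d1: "N - Suc t = d" "Suc t \<le> N" using Suc.prems(1,2) by auto
          have X: "solv n F R' (K + 2 * log 2 (card (ot g n N ` R')) + 2 * real (N - Suc t))"
            using Suc.IH[OF d1 True ne] .
          have le: "log 2 (card (ot g n N ` R')) \<le> log 2 W" using c'pos c'le by simp
          have e: "real (N - Suc t) = real (N - t) - 1" using tN by simp
          show ?thesis unfolding B_def by (rule solv_mono[OF X subset_refl]) (use le e in auto)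
        next
          case False
          then have h2: "2 * card (ot g n N ` R') \<le> W" using h by blast
          then have "card (ot g n N ` R') < c" using c'pos less.prems(1) W_def by simp
          then have "solv n F R' (K + 2 * log 2 (card (ot g n N ` R')) + 2 * real (N - t))"
            using less.IH agree_sub[OF less.prems(2) R'] ne by blast
          moreover have "log 2 (card (ot g n N ` R')) \<le> log 2 W - 1" using log2_half[OF c'pos h2] .
          ultimately show ?thesis unfolding B_def using solv_mono[of n F R' _ R'] by auto
        qed
      qed
    qed
    then show ?case unfolding B_def W_def by simp
  qed
  show ?case using main Suc.prems by blast
qed

definition ev :: "nat set \<Rightarrow> (nat \<Rightarrow> real) \<times> real \<Rightarrow> (nat \<Rightarrow> real) \<Rightarrow> real" where
  "ev I h p = (\<Sum>i\<in>I. fst h i * p i) + snd h"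

definition sv :: "'j set \<Rightarrow> nat set \<Rightarrow> ('j \<Rightarrow> (nat \<Rightarrow> real) \<times> real) \<Rightarrow> (nat \<Rightarrow> real) \<Rightarrow> ('j \<Rightarrow> real)" where
  "sv J I F p = restrict (\<lambda>j. sgn (ev I (F j) p)) J"

lemma sv_finite: "finite J \<Longrightarrow> finite (range (sv J I F))"
proof (rule finite_subset)
  assume "finite J"
  show "range (sv J I F) \<subseteq> Pi\<^sub>E J (\<lambda>_. {-1,0,1::real})"
  proof (rule image_subsetI)
    fix p
    have "\<And>z::real. sgn z \<in> {-1,0,1}" by (simp add: sgn_if)
    then show "sv J I F p \<in> Pi\<^sub>E J (\<lambda>_. {-1,0,1::real})"
      unfolding sv_def restrict_PiE_iff by auto
  qed
  show "finite (Pi\<^sub>E J (\<lambda>_. {-1,0,1::real}))" using \<open>finite J\<close> by (rule finite_PiE) auto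
qed

lemma ev_comb: "ev I h (\<lambda>i. (1 - l) * p i + l * q i) = (1 - l) * ev I h p + l * ev I h q"
proof -
  have "(\<Sum>i\<in>I. fst h i * ((1 - l) * p i + l * q i)) = (1 - l) * (\<Sum>i\<in>I. fst h i * p i) + l * (\<Sum>i\<in>I. fst h i * q i)"
    by (simp add: sum_distrib_left sum.distrib[symmetric] algebra_simps)
  then show ?thesis unfolding ev_def by (simp add: algebra_simps)
qed

lemma sgn_comb:
  fixes a b l :: real
  assumes "0 \<le> l" "l \<le> 1" "sgn a = sgn b"
  shows "sgn ((1 - l) * a + l * b) = sgn a"
proof -
  have "a > 0 \<and> b > 0 \<or> a = 0 \<and> b = 0 \<or> a < 0 \<and> b < 0" using assms(3) by (auto simp: sgn_if split: if_splits)
  moreover have "(1 - l) * a + l * b > 0" if "a > 0" "b > 0"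
  proof -
    have "(1 - l) * a + l * b \<ge> (1 - l) * min a b + l * min a b"
      using assms(1,2) by (intro add_mono mult_left_mono) auto
    then show ?thesis using that by (simp add: algebra_simps)
  qed
  moreover have "(1 - l) * a + l * b < 0" if "a < 0" "b < 0"
  proof -
    have "(1 - l) * a + l * b \<le> (1 - l) * max a b + l * max a b"
      using assms(1,2) by (intro add_mono mult_left_mono) auto
    then show ?thesis using that by (simp add: algebra_simps)
  qed
  ultimately show ?thesis by (auto simp: sgn_if)
qed

definition subst :: "(nat \<Rightarrow> real) \<times> real \<Rightarrow> nat \<Rightarrow> (nat \<Rightarrow> real) \<times> real \<Rightarrow> (nat \<Rightarrow> real) \<times> real" where
  "subst f t h = (\<lambda>i. fst h i - fst h t * fst f i / fst f t, snd h - fst h t * snd f / fst f t)"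

lemma ev_subst:
  assumes I: "finite I" "t \<in> I" and ft: "fst f t \<noteq> 0" and z: "ev I f p = 0"
  shows "ev I h p = ev (I - {t}) (subst f t h) p"
proof -
  define Sa where "Sa = (\<Sum>i\<in>I-{t}. fst f i * p i)"
  define Sb where "Sb = (\<Sum>i\<in>I-{t}. fst h i * p i)"
  have "ev I f p = Sa + fst f t * p t + snd f"
    unfolding ev_def Sa_def using I by (simp add: sum.remove[of I t])
  then have pt: "p t = - (Sa + snd f) / fst f t" using z ft by (simp add: field_simps)
  have "ev I h p = Sb + fst h t * p t + snd h"
    unfolding ev_def Sb_def using I by (simp add: sum.remove[of I t])
  also have "\<dots> = Sb - fst h t / fst f t * Sa + snd h - fst h t * snd f / fst f t"
    unfolding pt using ft by (simp add: field_simps)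
  also have "\<dots> = ev (I - {t}) (subst f t h) p"
    unfolding ev_def subst_def Sa_def Sb_def
    by (simp add: algebra_simps sum_subtractf sum_distrib_left)
  finally show ?thesis .
qed

lemma pow_step_ineq: "(x::nat) ^ Suc e + 2 * x ^ e \<le> (x + 2) ^ Suc e"
proof -
  have "x ^ Suc e + 2 * x ^ e = (x + 2) * x ^ e" by (simp add: algebra_simps)
  also have "\<dots> \<le> (x + 2) * (x + 2) ^ e" by (intro mult_left_mono power_mono) auto
  finally show ?thesis by simp
qed

lemma card_pair_sing: "card ({a} \<times> B) = card B"
proof -
  have "{a} \<times> B = Pair a ` B" by auto
  moreover have "inj_on (Pair a) B" by (auto simp: inj_on_def)
  ultimately show ?thesis by (simp add: card_image)
qed

lemma sv_conv:
  assumes p: "ev I f p > 0" and q: "ev I f q < 0" and eq: "sv J I F p = sv J I F q"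
  shows "\<exists>z. ev I f z = 0 \<and> sv J I F z = sv J I F p"
proof -
  define l where "l = ev I f p / (ev I f p - ev I f q)"
  have l01: "0 \<le> l" "l \<le> 1" using p q unfolding l_def by (auto simp: field_simps)
  define z where "z = (\<lambda>i. (1 - l) * p i + l * q i)"
  have "ev I f z = (1 - l) * ev I f p + l * ev I f q" unfolding z_def by (rule ev_comb)
  also have "\<dots> = ev I f p - l * (ev I f p - ev I f q)" by (simp add: algebra_simps)
  also have "\<dots> = 0" unfolding l_def using p q by simp
  finally have z0: "ev I f z = 0" .
  have "sv J I F z = sv J I F p"
  proof (rule ext)
    fix j
    show "sv J I F z j = sv J I F p j"
    proof (cases "j \<in> J")
      case True
      have s: "sgn (ev I (F j) p) = sgn (ev I (F j) q)"
        using fun_cong[OF eq, of j] True by (simp add: sv_def)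
      have "sgn (ev I (F j) z) = sgn ((1 - l) * ev I (F j) p + l * ev I (F j) q)"
        unfolding z_def ev_comb ..
      also have "\<dots> = sgn (ev I (F j) p)" by (rule sgn_comb[OF l01 s])
      finally show ?thesis using True by (simp add: sv_def)
    qed (simp add: sv_def)
  qed
  then show ?thesis using z0 by blast
qed

lemma sv_count: "finite J \<Longrightarrow> finite I \<Longrightarrow> card (range (sv J I F)) \<le> (2 * card J + 1) ^ card I"
proof (induction J arbitrary: I F rule: finite_induct)
  case empty
  have "\<And>p. sv {} I F p = (\<lambda>_. undefined)" by (auto simp: sv_def)
  then have "range (sv {} I F) = {\<lambda>_. undefined}" by auto
  then show ?case by simp
next
  case (insert j0 J)
  define f where "f = F j0"
  define m where "m = card J"
  have cardins: "card (insert j0 J) = Suc m" using insert by (simp add: m_def)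
  have key: "sv (insert j0 J) I F p = (sv J I F p)(j0 := sgn (ev I f p))" for p
    using insert(2) by (auto simp: sv_def f_def restrict_def)
  define P' where "P' = range (\<lambda>p. (sgn (ev I f p), sv J I F p))"
  have "range (sv (insert j0 J) I F) = (\<lambda>(s,\<sigma>). \<sigma>(j0 := s)) ` P'"
    unfolding P'_def key by auto
  moreover have finR: "finite (range (sv J I F))" by (rule sv_finite[OF insert(1)])
  moreover have "P' \<subseteq> {-1,0,1} \<times> range (sv J I F)" unfolding P'_def by (auto simp: sgn_if split: if_splits)
  ultimately have "finite P'" by (meson finite.emptyI finite.insertI finite_SigmaI finite_subset)
  then have c1: "card (range (sv (insert j0 J) I F)) \<le> card P'"
    by (simp add: card_image_le \<open>range (sv (insert j0 J) I F) = _\<close>)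
  have IHR: "card (range (sv J I F)) \<le> (2 * m + 1) ^ card I" using insert.IH[OF insert(4)] m_def by simp
  show ?case
  proof (cases "\<forall>i\<in>I. fst f i = 0")
    case True
    have "\<And>p. ev I f p = snd f" using True unfolding ev_def by simp
    then have "P' \<subseteq> {sgn (snd f)} \<times> range (sv J I F)" unfolding P'_def by auto
    then have "card P' \<le> card ({sgn (snd f)} \<times> range (sv J I F))"
      by (intro card_mono) (use finR in auto)
    also have "\<dots> = card (range (sv J I F))" by (rule card_pair_sing)
    also have "\<dots> \<le> (2 * m + 1) ^ card I" by (rule IHR)
    also have "\<dots> \<le> (2 * Suc m + 1) ^ card I" by (intro power_mono) auto
    finally show ?thesis using c1 cardins by simp
  next
    case False
    then obtain t where t: "t \<in> I" "fst f t \<noteq> 0" by blast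
    define A where "A s = sv J I F ` {p. sgn (ev I f p) = s}" for s
    have finA: "finite (A s)" for s unfolding A_def by (rule finite_subset[OF _ finR]) auto
    have "P' \<subseteq> ({1} \<times> A 1) \<union> ({0} \<times> A 0) \<union> ({-1} \<times> A (-1))"
      unfolding P'_def A_def by (auto simp: sgn_if split: if_splits)
    moreover have "finite (({1} \<times> A 1) \<union> ({0} \<times> A 0) \<union> ({-1::real} \<times> A (-1)))"
      using finA by auto
    ultimately have "card P' \<le> card (({1::real} \<times> A 1) \<union> ({0} \<times> A 0) \<union> ({-1} \<times> A (-1)))"
      by (metis card_mono)
    also have "\<dots> \<le> card ({1::real} \<times> A 1) + card ({0::real} \<times> A 0) + card ({-1::real} \<times> A (-1))"
      by (meson add_le_mono card_Un_le le_refl order_trans)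
    also have "\<dots> = card (A 1) + card (A 0) + card (A (-1))" by (simp add: card_pair_sing)
    finally have c2: "card P' \<le> card (A 1) + card (A 0) + card (A (-1))" .
    have inter: "A 1 \<inter> A (-1) \<subseteq> A 0"
    proof
      fix \<sigma> assume "\<sigma> \<in> A 1 \<inter> A (-1)"
      then obtain p q where pq: "sgn (ev I f p) = 1" "sgn (ev I f q) = -1" "\<sigma> = sv J I F p" "\<sigma> = sv J I F q"
        unfolding A_def by auto
      have "ev I f p > 0" "ev I f q < 0" using pq(1,2) by (auto simp: sgn_if split: if_splits)
      then obtain z where "ev I f z = 0" "sv J I F z = sv J I F p" using sv_conv pq(3,4) by metis
      then show "\<sigma> \<in> A 0" unfolding A_def using pq(3) by (intro image_eqI[of _ _ z]) auto
    qed
    have "card (A 1) + card (A (-1)) = card (A 1 \<union> A (-1)) + card (A 1 \<inter> A (-1))"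
      by (rule card_Un_Int[OF finA finA])
    also have "\<dots> \<le> card (range (sv J I F)) + card (A 0)"
      by (intro add_mono card_mono finR finA inter) (auto simp: A_def)
    finally have c3: "card (A 1) + card (A (-1)) \<le> card (range (sv J I F)) + card (A 0)" .
    have "A 0 \<subseteq> range (sv J (I - {t}) (\<lambda>j. subst f t (F j)))"
    proof
      fix \<sigma> assume "\<sigma> \<in> A 0"
      then obtain p where p: "ev I f p = 0" "\<sigma> = sv J I F p" unfolding A_def by (auto simp: sgn_0_0)
      have "sv J I F p = sv J (I - {t}) (\<lambda>j. subst f t (F j)) p"
        unfolding sv_def using ev_subst[OF insert(4) t p(1)] by simp
      then show "\<sigma> \<in> range (sv J (I - {t}) (\<lambda>j. subst f t (F j)))" using p by auto
    qed
    then have "card (A 0) \<le> card (range (sv J (I - {t}) (\<lambda>j. subst f t (F j))))"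
      by (intro card_mono sv_finite insert(1))
    also have "\<dots> \<le> (2 * m + 1) ^ card (I - {t})"
      using insert.IH[of "I - {t}"] insert(4) m_def by simp
    finally have c4: "card (A 0) \<le> (2 * m + 1) ^ (card I - 1)" using t insert(4) by simp
    obtain e where e: "card I = Suc e" using t insert(4) by (cases "card I") auto
    have "card (range (sv (insert j0 J) I F)) \<le> (2 * m + 1) ^ Suc e + 2 * (2 * m + 1) ^ e"
      using c1 c2 c3 c4 IHR e by simp
    also have "\<dots> \<le> (2 * m + 1 + 2) ^ Suc e" by (rule pow_step_ineq)
    finally show ?thesis using cardins e by simp
  qed
qed

definition emb_f :: "nat \<Rightarrow> linform \<Rightarrow> (nat \<Rightarrow> real) \<times> real" where
  "emb_f n l = (case l of (a,b,c) \<Rightarrow> (\<lambda>i. if i < n then a i else b (i - n), c))"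

definition emb_p :: "nat \<Rightarrow> (nat \<Rightarrow> real) \<Rightarrow> (nat \<Rightarrow> real) \<Rightarrow> (nat \<Rightarrow> real)" where
  "emb_p n x y = (\<lambda>i. if i < n then x i else y (i - n))"

lemma lin_emb: "lin n l x y = ev {..<2*n} (emb_f n l) (emb_p n x y)"
proof (cases l)
  case (fields a b c)
  define h where "h i = (if i < n then a i else b (i - n)) * emb_p n x y i" for i
  have "(\<Sum>i<2*n. h i) = (\<Sum>i\<in>{0..<n}. h i) + (\<Sum>i\<in>{n..<2*n}. h i)"
    by (simp add: atLeast0LessThan[symmetric] sum.atLeastLessThan_concat)
  also have "(\<Sum>i\<in>{n..<2*n}. h i) = (\<Sum>i\<in>{0..<n}. h (i + n))"
    using sum.shift_bounds_nat_ivl[of h 0 n n] by (simp add: mult_2)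
  finally have "(\<Sum>i<2*n. h i) = (\<Sum>i<n. a i * x i) + (\<Sum>i<n. b i * y i)"
    by (simp add: h_def emb_p_def atLeast0LessThan)
  then show ?thesis using fields by (simp add: lin_def ev_def emb_f_def h_def)
qed

lemma ot_bound: "card (range (ot g n N)) \<le> (2 * (N * N) + 1) ^ (2 * n)"
proof -
  define G where "G = (\<lambda>(u,v). emb_f n (sub (g u) (g v)))"
  have "ot g n N p = sv ({..<N}\<times>{..<N}) {..<2*n} G (emb_p n (fst p) (snd p))" for p
    unfolding ot_def sv_def G_def
    by (rule ext) (auto simp: restrict_def val_def lin_emb[symmetric])
  then have "range (ot g n N) \<subseteq> range (sv ({..<N}\<times>{..<N}) {..<2*n} G)" by auto
  then have "card (range (ot g n N)) \<le> card (range (sv ({..<N}\<times>{..<N}) {..<2*n} G))"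
    by (intro card_mono sv_finite) auto
  also have "\<dots> \<le> (2 * card ({..<N}\<times>{..<N}) + 1) ^ card {..<2*n}"
    by (rule sv_count) auto
  finally show ?thesis by (simp add: card_cartesian_product)
qed

definition ex :: "nat \<Rightarrow> linform" where "ex i = ((\<lambda>m. if m = i then 1 else 0), (\<lambda>_. 0), 0)"
definition ey :: "nat \<Rightarrow> linform" where "ey j = ((\<lambda>_. 0), (\<lambda>m. if m = j then 1 else 0), 0)"

lemma sum_delta_lt: "i < (n::nat) \<Longrightarrow> (\<Sum>m<n. (if m = i then 1 else 0) * (x m :: real)) = x i"
proof -
  assume i: "i < n"
  have "(\<Sum>m<n. (if m = i then 1 else 0) * x m) = (\<Sum>m<n. if m = i then x i else 0)"
    by (rule sum.cong) auto
  also have "\<dots> = x i" by (subst sum.delta) (use i in auto)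
  finally show ?thesis .
qed

lemma lin_ex: "i < n \<Longrightarrow> lin n (ex i) x y = x i"
  unfolding lin_def ex_def using sum_delta_lt[of i n x] by simp

lemma lin_ey: "j < n \<Longrightarrow> lin n (ey j) x y = y j"
  unfolding lin_def ey_def using sum_delta_lt[of j n y] by simp

definition PL :: "nat \<Rightarrow> nat \<Rightarrow> (nat \<times> nat) list" where
  "PL n d = concat (map (\<lambda>i. map (\<lambda>i'. (i,i')) [i+1-d..<min n (i+d)]) [0..<n])"

lemma PL_mem: "(i,i') \<in> set (PL n d) \<longleftrightarrow> i < n \<and> i + 1 - d \<le> i' \<and> i' < min n (i+d)"
  unfolding PL_def by (auto intro: bexI[of _ i])

lemma length_concat_le: "(\<forall>x\<in>set xs. length (f x) \<le> c) \<Longrightarrow> length (concat (map f xs)) \<le> length xs * c"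
  by (induction xs) auto

lemma PL_length: "length (PL n d) \<le> n * (2 * d)"
proof -
  have "length (PL n d) \<le> length [0..<n] * (2 * d)"
    unfolding PL_def by (rule length_concat_le) auto
  then show ?thesis by simp
qed

definition GL :: "nat \<Rightarrow> nat \<Rightarrow> linform list" where
  "GL n d = map (\<lambda>(i,i'). sub (ex i) (ex i')) (PL n d) @ map (\<lambda>(j,j'). sub (ey j) (ey j')) (PL n d)"

lemma same_block: "0 < d \<Longrightarrow> a div d = b div d \<Longrightarrow> a < b + (d::nat)"
proof -
  assume d: "0 < d" and e: "a div d = b div d"
  have "a < (a div d + 1) * d" using d div_less_iff_less_mult[of d a "a div d + 1"] by simp
  also have "\<dots> = b div d * d + d" using e by simp
  also have "\<dots> \<le> b + d" using div_times_less_eq_dividend[of b d] by simp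
  finally show ?thesis .
qed

lemma PL_pair:
  assumes d: "0 < d" and w: "w \<le> k" and i: "i \<le> k" and k: "k < n" and b: "w div d = i div d"
  shows "(w, i) \<in> set (PL n d)" "(k - w, k - i) \<in> set (PL n d)"
proof -
  have a1: "w < i + d" using same_block[OF d b] .
  have a2: "i < w + d" using same_block[OF d b[symmetric]] .
  show "(w, i) \<in> set (PL n d)" unfolding PL_mem using a1 a2 w i k by auto
  show "(k - w, k - i) \<in> set (PL n d)" unfolding PL_mem using a1 a2 w i k by auto
qed

lemma base_case:
  fixes n d :: nat and R
  assumes d: "0 < d"
    and ag: "agree (\<lambda>u. GL n d ! u) n R (length (GL n d))"
  shows "solv n min_minus_conv R (real (\<Sum>k<n. k div d))"
proof (cases "R = {}")
  case True then show ?thesis using solv_empty[of "real (\<Sum>k<n. k div d)" n min_minus_conv] by (simp add: sum_nonneg)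
next
  case False
  then obtain p0 where p0: "p0 \<in> R" by blast
  define g where "g = (\<lambda>u. GL n d ! u)"
  define N where "N = length (GL n d)"
  have agN: "agree g n R N" using ag unfolding g_def N_def .
  define v0 where "v0 k i = fst p0 i - snd p0 (k - i)" for k i
  define G where "G k a = {i. i \<le> k \<and> i div d = a}" for k a
  define w where "w k a = (SOME i. i \<in> G k a \<and> (\<forall>i'\<in>G k a. v0 k i \<le> v0 k i'))" for k a
  have w_prop: "w k a \<in> G k a \<and> (\<forall>i'\<in>G k a. v0 k (w k a) \<le> v0 k i')" if a: "a \<le> k div d" for k a
  proof -
    have fin: "finite (G k a)" unfolding G_def by (rule finite_subset[of _ "{..k}"]) auto
    have "a * d \<in> G k a" unfolding G_def using a d
      by (auto simp: less_eq_div_iff_mult_less_eq)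
    then have "G k a \<noteq> {}" by blast
    from ex_argmin[OF fin this, of "v0 k"]
    have "\<exists>i. i \<in> G k a \<and> (\<forall>i'\<in>G k a. v0 k i \<le> v0 k i')" by blast
    then show ?thesis unfolding w_def by (rule someI_ex)
  qed
  have lenGL: "length (GL n d) = 2 * length (PL n d)" by (simp add: GL_def)
  have key: "x (w k a) - y (k - w k a) \<le> x i - y (k - i)"
    if k: "k < n" and a: "a \<le> k div d" and xy: "(x,y) \<in> R" and i: "i \<in> G k a" for k a x y i
  proof -
    define ww where "ww = w k a"
    have ww: "ww \<le> k" "ww div d = a" using w_prop[OF a] unfolding ww_def G_def by auto
    have ii: "i \<le> k" "i div d = a" using i unfolding G_def by auto
    have P1: "(ww, i) \<in> set (PL n d)" and P2: "(k - ww, k - i) \<in> set (PL n d)"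
      using PL_pair[OF d ww(1) ii(1) k] ww(2) ii(2) by auto
    obtain u where u: "u < length (PL n d)" "PL n d ! u = (ww, i)" using P1 by (metis in_set_conv_nth)
    obtain v where v: "v < length (PL n d)" "PL n d ! v = (k - ww, k - i)" using P2 by (metis in_set_conv_nth)
    have gu: "g u = sub (ex ww) (ex i)" unfolding g_def GL_def using u by (simp add: nth_append)
    have gv: "g (length (PL n d) + v) = sub (ey (k - ww)) (ey (k - i))" unfolding g_def GL_def using v
      by (metis (no_types, lifting) case_prod_conv length_map nth_append_length_plus nth_map)
    have uN: "u < N" and vN: "length (PL n d) + v < N" using u v lenGL unfolding N_def by auto
    have lt: "ww < n" "i < n" "k - ww < n" "k - i < n" using ww ii k by auto
    have valu: "val g n u q = fst q ww - fst q i" for q unfolding val_def gu using lt by (simp add: lin_ex)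
    have valv: "val g n (length (PL n d) + v) q = snd q (k - ww) - snd q (k - i)" for q
      unfolding val_def gv using lt by (simp add: lin_ey)
    have "v0 k ww \<le> v0 k i" using w_prop[OF a] i unfolding ww_def by blast
    then have "val g n u p0 \<le> val g n (length (PL n d) + v) p0" unfolding valu valv v0_def by simp
    from agree_le[OF agN p0 xy uN vN this]
    have "x ww - x i \<le> y (k - ww) - y (k - i)" unfolding valu valv by simp
    then show ?thesis unfolding ww_def by simp
  qed
  define C where "C k = map (\<lambda>a. sub (ex (w k a)) (ey (k - w k a))) [0..<Suc (k div d)]" for k
  have sp: "spec n min_minus_conv R C"
    unfolding spec_def
  proof (intro conjI allI impI)
    fix k assume "k < n" show "C k \<noteq> []" unfolding C_def by simp
  next
    fix x y k assume xy: "(x,y) \<in> R" and k: "k < n"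
    define S where "S = {x i - y (k - i) | i. i \<le> k}"
    have finS: "finite S" unfolding S_def by simp
    have neS: "S \<noteq> {}" unfolding S_def by auto
    have mm: "min_minus_conv x y k = Min S" unfolding min_minus_conv_def S_def ..
    have linC: "lin n (sub (ex (w k a)) (ey (k - w k a))) x y = x (w k a) - y (k - w k a)" if a: "a \<le> k div d" for a
    proof -
      have "w k a \<le> k" using w_prop[OF a] unfolding G_def by auto
      then show ?thesis using k by (simp add: lin_ex lin_ey)
    qed
    have inS: "x (w k a) - y (k - w k a) \<in> S" if a: "a \<le> k div d" for a
      using w_prop[OF a] unfolding G_def S_def by auto
    show "\<exists>h\<in>set (C k). min_minus_conv x y k = lin n h x y"
    proof -
      obtain i0 where i0: "i0 \<le> k" "Min S = x i0 - y (k - i0)"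
        using Min_in[OF finS neS] unfolding S_def by auto
      define a0 where "a0 = i0 div d"
      have a0: "a0 \<le> k div d" unfolding a0_def using i0 by (simp add: div_le_mono)
      have "i0 \<in> G k a0" unfolding G_def a0_def using i0 by simp
      then have le1: "x (w k a0) - y (k - w k a0) \<le> Min S" using key[OF k a0 xy] i0 by simp
      have le2: "Min S \<le> x (w k a0) - y (k - w k a0)" using Min_le[OF finS inS[OF a0]] .
      have "a0 \<in> set [0..<Suc (k div d)]" unfolding set_upt using a0 by simp
      then have "sub (ex (w k a0)) (ey (k - w k a0)) \<in> set (C k)" unfolding C_def set_map by (rule imageI)
      moreover have "min_minus_conv x y k = lin n (sub (ex (w k a0)) (ey (k - w k a0))) x y"
        using le1 le2 mm linC[OF a0] by simp
      ultimately show ?thesis by blast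
    qed
    show "\<forall>h\<in>set (C k). min_minus_conv x y k \<le> lin n h x y"
    proof
      fix h assume "h \<in> set (C k)"
      then obtain a where a0: "a \<in> set [0..<Suc (k div d)]" and a2: "h = sub (ex (w k a)) (ey (k - w k a))"
        unfolding C_def set_map by (rule imageE)
      have a1: "a \<le> k div d" using a0 unfolding set_upt by simp
      note a = a1 a2
      show "min_minus_conv x y k \<le> lin n h x y"
        unfolding mm a(2) linC[OF a(1)] using Min_le[OF finS inS[OF a(1)]] .
    qed
  qed
  have "(\<Sum>k<n. length (C k) - 1) = (\<Sum>k<n. k div d)" unfolding C_def by simp
  from final_aux[OF this sp] show ?thesis .
qed

lemma log2_le_self: "0 < m \<Longrightarrow> log 2 (real m) \<le> real m"
proof -
  assume m: "0 < m"
  have "m < 2 ^ m" by (rule less_exp)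
  then have "real m < 2 ^ m" by (metis of_nat_less_iff of_nat_numeral of_nat_power)
  then have "log 2 (real m) \<le> log 2 (2 ^ m)" using m by (subst log_le_cancel_iff) auto
  also have "\<dots> = real m" by (simp add: log_nat_power)
  finally show ?thesis .
qed

lemma total_bound:
  fixes n d N c :: nat
  assumes n: "1 \<le> n" and d: "1 \<le> d" and nd: "n \<le> d * d" and dn: "real d \<le> 2 * sqrt n"
    and N: "N \<le> 4 * n * d" and c: "0 < c" "c \<le> (2 * (N * N) + 1) ^ (2 * n)"
    and K: "K \<le> real (n * d)"
  shows "K + 2 * log 2 (real c) + 2 * real N \<le> 114 * real n * sqrt (real n)"
proof -
  define M where "M = 2 * (N * N) + 1"
  have M1: "0 < M" unfolding M_def by simp
  have "N * N \<le> (4 * n * d) * (4 * n * d)" using N by (intro mult_le_mono) auto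
  also have "\<dots> = 16 * ((n * n) * (d * d))" by (simp add: algebra_simps)
  finally have NN: "N * N \<le> 16 * ((n * n) * (d * d))" .
  have one: "1 \<le> (n * n) * (d * d)" using n d by simp
  have "M \<le> 33 * ((n * n) * (d * d))" unfolding M_def using NN one by linarith
  also have "\<dots> = 33 * (n * n) * (d * d)" by simp
  also have "\<dots> \<le> 33 * (d * d * (d * d)) * (d * d)" using nd by (intro mult_le_mono) auto
  also have "\<dots> \<le> (2 * d) ^ 6" by (simp add: power_mult_distrib power_def eval_nat_numeral algebra_simps)
  finally have M2: "M \<le> (2 * d) ^ 6" .
  have "real c \<le> real (M ^ (2 * n))" using c M_def by (simp only: of_nat_le_iff)
  then have "log 2 (real c) \<le> log 2 (real (M ^ (2 * n)))" using c M1 by (subst log_le_cancel_iff) auto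
  also have "\<dots> = real (2 * n) * log 2 (real M)" using M1 by (simp add: log_nat_power)
  finally have l1: "log 2 (real c) \<le> real (2 * n) * log 2 (real M)" .
  have "real M \<le> real ((2 * d) ^ 6)" using M2 by (simp only: of_nat_le_iff)
  then have "log 2 (real M) \<le> log 2 (real ((2 * d) ^ 6))" using M1 d by (subst log_le_cancel_iff) auto
  also have "\<dots> = 6 * log 2 (real (2 * d))" using d log_nat_power[of "real (2 * d)" 2 6]
    by (simp only: of_nat_power)
  also have "\<dots> \<le> 6 * real (2 * d)" using log2_le_self[of "2 * d"] d by simp
  finally have l2: "log 2 (real M) \<le> 12 * real d" by simp
  have "log 2 (real c) \<le> real (2 * n) * (12 * real d)"
    using l1 l2 by (meson mult_left_mono of_nat_0_le_iff order_trans)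
  then have A: "2 * log 2 (real c) \<le> 48 * real n * real d" by (simp add: algebra_simps)
  have "real N \<le> real (4 * n * d)" using N by (simp only: of_nat_le_iff)
  then have B: "2 * real N \<le> 8 * real n * real d" by (simp add: algebra_simps)
  have "K + 2 * log 2 (real c) + 2 * real N \<le> 57 * (real n * real d)" using A B K by (simp add: algebra_simps)
  also have "\<dots> \<le> 57 * (real n * (2 * sqrt n))" using dn by (intro mult_left_mono) auto
  finally show ?thesis by simp
qed

theorem theorem4:
  shows "\<exists>C::real. \<forall>n::nat. \<exists>T. computes_min_minus_conv n T \<and>
           real (depth T) \<le> C * real n * sqrt (real n)"
proof -
  have "\<exists>T. computes_min_minus_conv n T \<and> real (depth T) \<le> 114 * real n * sqrt (real n)" for n :: nat
  proof (cases "n = 0")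
    case True
    show ?thesis
      by (rule exI[of _ "Leaf (\<lambda>_. (\<lambda>_. 0, \<lambda>_. 0, 0))"]) (simp add: True computes_min_minus_conv_def)
  next
    case False
    then have n1: "1 \<le> n" by simp
    define d where "d = nat \<lceil>sqrt (real n)\<rceil>"
    have sq1: "1 \<le> sqrt (real n)" using n1 by simp
    have ce: "real d = real_of_int \<lceil>sqrt (real n)\<rceil>" unfolding d_def using sq1 by simp
    have dge: "sqrt (real n) \<le> real d" unfolding ce by (rule le_of_int_ceiling)
    have dle: "real d \<le> sqrt (real n) + 1" unfolding ce by (rule of_int_ceiling_le_add_one)
    have "(1::real) \<le> real d" using dge sq1 by linarith
    then have d1: "1 \<le> d" by simp
    have dn: "real d \<le> 2 * sqrt (real n)" using dle sq1 by linarith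
    have "real n \<le> real d * real d"
    proof -
      have "real n = sqrt (real n) * sqrt (real n)" by simp
      also have "\<dots> \<le> real d * real d" using dge sq1 by (intro mult_mono) auto
      finally show ?thesis .
    qed
    then have nd: "n \<le> d * d" by (simp only: of_nat_mult[symmetric] of_nat_le_iff)
    define g where "g = (\<lambda>u. GL n d ! u)"
    define N where "N = length (GL n d)"
    define K where "K = real (\<Sum>k<n. k div d)"
    have K0: "K \<ge> 0" unfolding K_def by (simp add: sum_nonneg)
    have "(\<Sum>k<n. k div d) \<le> (\<Sum>k<n. d)"
    proof (rule sum_mono)
      fix k assume "k \<in> {..<n}"
      then have "k < d * d" using nd by simp
      then have "k div d < d" using d1 by (simp add: div_less_iff_less_mult)
      then show "k div d \<le> d" by simp
    qed
    then have KB: "K \<le> real (n * d)" unfolding K_def by (simp only: of_nat_le_iff) simp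
    have NB: "N \<le> 4 * n * d" unfolding N_def GL_def using PL_length[of n d] by simp
    have base: "\<And>R. agree g n R N \<Longrightarrow> solv n min_minus_conv R K"
      unfolding g_def N_def K_def using d1 by (intro base_case) auto
    have ag0: "agree g n UNIV 0" unfolding agree_def by simp
    have S: "solv n min_minus_conv UNIV (K + 2 * log 2 (card (ot g n N ` UNIV)) + 2 * real (N - 0))"
      using fredman[OF base K0, where t=0 and d=N and R=UNIV] ag0 by simp
    define c where "c = card (range (ot g n N))"
    have c0: "0 < c" unfolding c_def using ot_card_pos[of UNIV g n N] by simp
    have cB: "c \<le> (2 * (N * N) + 1) ^ (2 * n)" unfolding c_def by (rule ot_bound)
    have "K + 2 * log 2 (real c) + 2 * real N \<le> 114 * real n * sqrt (real n)"
      by (rule total_bound[OF n1 d1 nd dn NB c0 cB KB])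
    with S have "solv n min_minus_conv UNIV (114 * real n * sqrt (real n))"
      unfolding c_def by (intro solv_mono[OF S]) auto
    then show ?thesis unfolding solv_def computes_min_minus_conv_def by auto
  qed
  then show ?thesis by blast
qed

end
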